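(* Let $E$ be a topological space, let $\Omega\subseteq E$ be a non-empty relatively compact open set with $\partial\Omega\neq\emptyset$, and let $Y$ be a real locally convex Hausdorff topological vector space. For any continuous function $f:\Omega\to Y$, at least one of the following holds: (i) $f$ satisfies the convex hull-like property in $\Omega$; (ii) there exists a non-empty open set $X\subseteq\Omega$ with $\overline{X}\subseteq\Omega$ such that for every continuous function $g:\Omega\to Y$ there exists $\tilde\lambda\ge 0$ such that, for each $\lambda>\tilde\lambda$, the set $(g+\lambda f)(X)$ is supported at one of its points.
   Context: $\overline{\Omega}$, $\partial\Omega$ denote closure and boundary in $E$. A function $\psi:Y\to\mathbf{R}$ is quasi-convex if for each $r\in\mathbf{R}$ the set $\psi^{-1}(]-\infty,r])$ is convex. A continuous function $f:\Omega\to Y$ satisfies the convex hull-like property in $\Omega$ if for every continuous quasi-convex $\psi:Y\to\mathbf{R}$ there exists $x^*\in\partial\Omega$ such that $\limsup_{x\to x^*,\,x\in\Omega}\psi(f(x))=\sup_{x\in\Omega}\psi(f(x))$. A set $S\subseteq Y$ is supported at $y_0\in S$ if there exists a continuous linear functional $\varphi\in Y^*\setminus\{0\}$ with $\varphi(y_0)\le\varphi(y)$ for all $y\in S$. *)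

theory Defs
  imports "HOL-Analysis.Analysis"
begin

definition lc_hausdorff_tvs :: "'b::real_vector topology \<Rightarrow> bool" where
  "lc_hausdorff_tvs T \<longleftrightarrow>
     topspace T = UNIV \<and>
     continuous_map (prod_topology T T) T (\<lambda>(x, y). x + y) \<and>
     continuous_map (prod_topology euclideanreal T) T (\<lambda>(a, x). a *\<^sub>R x) \<and>
     Hausdorff_space T \<and>
     (\<forall>U x. openin T U \<and> x \<in> U \<longrightarrow> (\<exists>V. openin T V \<and> convex V \<and> x \<in> V \<and> V \<subseteq> U))"

definition quasi_convex :: "('b::real_vector \<Rightarrow> real) \<Rightarrow> bool" where
  "quasi_convex \<psi> \<longleftrightarrow> (\<forall>r. convex (\<psi> -` {..r}))"

definition convex_hull_like :: "'b::real_vector topology \<Rightarrow> ('a::topological_space \<Rightarrow> 'b) \<Rightarrow> 'a set \<Rightarrow> bool" where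
  "convex_hull_like T f \<Omega> \<longleftrightarrow>
     (\<forall>\<psi>. continuous_map T euclideanreal \<psi> \<and> quasi_convex \<psi> \<longrightarrow>
        (\<exists>xs \<in> frontier \<Omega>.
           Limsup (at xs within \<Omega>) (\<lambda>x. ereal (\<psi> (f x))) = (SUP x\<in>\<Omega>. ereal (\<psi> (f x)))))"

definition supported_at :: "'b::real_vector topology \<Rightarrow> 'b set \<Rightarrow> 'b \<Rightarrow> bool" where
  "supported_at T S y0 \<longleftrightarrow> y0 \<in> S \<and>
     (\<exists>\<phi>::'b \<Rightarrow> real. linear \<phi> \<and> continuous_map T euclideanreal \<phi> \<and> \<phi> \<noteq> (\<lambda>_. 0) \<and>
        (\<forall>y\<in>S. \<phi> y0 \<le> \<phi> y))"

end

theory Submission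
  imports Defs "HOL-Analysis.Analysis"
begin


definition good :: "('b::real_vector \<Rightarrow> real) \<Rightarrow> 'b \<Rightarrow> ('b \<times> real) set \<Rightarrow> bool" where
  "good p v G \<longleftrightarrow> (\<forall>x a b. (x,a) \<in> G \<longrightarrow> (x,b) \<in> G \<longrightarrow> a = b) \<and> (v, p v) \<in> G \<and>
     (\<forall>x a. (x,a) \<in> G \<longrightarrow> a \<le> p x) \<and>
     (\<forall>x y a b. (x,a) \<in> G \<longrightarrow> (y,b) \<in> G \<longrightarrow> (x+y, a+b) \<in> G) \<and>
     (\<forall>x a c. (x,a) \<in> G \<longrightarrow> (c *\<^sub>R x, c*a) \<in> G)"

locale sublin =
  fixes p :: "'b::real_vector \<Rightarrow> real"
  assumes add: "p (x + y) \<le> p x + p y"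
    and hom: "c > 0 \<Longrightarrow> p (c *\<^sub>R x) = c * p x"
    and zero: "p 0 = 0"
begin

lemma neg_bound: "- p (- x) \<le> p x"
  using add[of x "-x"] zero by simp

lemma base_good: "good p v {(t *\<^sub>R v, t * p v) | t. True}"
proof -
  have dom: "t * p v \<le> p (t *\<^sub>R v)" for t
  proof (cases "t > 0")
    case True then show ?thesis using hom by simp
  next
    case False
    show ?thesis
    proof (cases "t = 0")
      case True then show ?thesis using zero by simp
    next
      case f2: False
      with False have "-t > 0" by simp
      then have "p ((-t) *\<^sub>R v) = (-t) * p v" using hom by blast
      moreover have "- p (- (t *\<^sub>R v)) \<le> p (t *\<^sub>R v)" by (rule neg_bound)
      ultimately show ?thesis by simp
    qed
  qed
  have funq: "a = b" if "s *\<^sub>R v = t *\<^sub>R v" "a = s * p v" "b = t * p v" for s t a b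
  proof (cases "v = 0")
    case True then show ?thesis using that zero by simp
  next
    case False
    then have "s = t" using that(1) by (simp add: scaleR_cancel_right)
    then show ?thesis using that by simp
  qed
  have memb: "(t *\<^sub>R v, t * p v) \<in> {(t *\<^sub>R v, t * p v) | t. True}" for t by blast
  show ?thesis unfolding good_def
  proof (intro conjI allI impI)
    fix x a b assume "(x,a) \<in> {(t *\<^sub>R v, t * p v) | t. True}" "(x,b) \<in> {(t *\<^sub>R v, t * p v) | t. True}"
    then obtain s t where "x = s *\<^sub>R v" "a = s * p v" "x = t *\<^sub>R v" "b = t * p v" by blast
    then show "a = b" by (metis funq)
  next
    show "(v, p v) \<in> {(t *\<^sub>R v, t * p v) | t. True}" using memb[of 1] by simp
  next
    fix x a assume "(x,a) \<in> {(t *\<^sub>R v, t * p v) | t. True}" then show "a \<le> p x" using dom by auto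
  next
    fix x y a b assume "(x,a) \<in> {(t *\<^sub>R v, t * p v) | t. True}" "(y,b) \<in> {(t *\<^sub>R v, t * p v) | t. True}"
    then obtain s t where "x = s *\<^sub>R v" "a = s * p v" "y = t *\<^sub>R v" "b = t * p v" by blast
    then show "(x+y, a+b) \<in> {(t *\<^sub>R v, t * p v) | t. True}"
      using memb[of "s+t"] by (simp add: scaleR_add_left algebra_simps)
  next
    fix x a c assume "(x,a) \<in> {(t *\<^sub>R v, t * p v) | t. True}"
    then obtain s where "x = s *\<^sub>R v" "a = s * p v" by auto
    then show "(c *\<^sub>R x, c*a) \<in> {(t *\<^sub>R v, t * p v) | t. True}"
      using memb[of "c * s"] by simp
  qed
qed

lemma good_fn: "good p v G \<Longrightarrow> (x,a) \<in> G \<Longrightarrow> (x,b) \<in> G \<Longrightarrow> a = b"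
  unfolding good_def by blast
lemma good_v: "good p v G \<Longrightarrow> (v, p v) \<in> G"
  unfolding good_def by blast
lemma good_dom: "good p v G \<Longrightarrow> (x,a) \<in> G \<Longrightarrow> a \<le> p x"
  unfolding good_def by blast
lemma good_add: "good p v G \<Longrightarrow> (x,a) \<in> G \<Longrightarrow> (y,b) \<in> G \<Longrightarrow> (x+y, a+b) \<in> G"
  unfolding good_def by blast
lemma good_sc: "good p v G \<Longrightarrow> (x,a) \<in> G \<Longrightarrow> (c *\<^sub>R x, c*a) \<in> G"
  unfolding good_def by blast

lemma chain_good:
  assumes "C \<in> chains {G. good p v G}" "C \<noteq> {}"
  shows "good p v (\<Union>C)"
proof -
  have ch: "\<And>A B. A \<in> C \<Longrightarrow> B \<in> C \<Longrightarrow> A \<subseteq> B \<or> B \<subseteq> A" and gd: "\<And>A. A \<in> C \<Longrightarrow> good p v A"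
    using assms(1) unfolding chains_def chain_subset_def by auto
  have two: "\<exists>D\<in>C. (x,a) \<in> D \<and> (y,b) \<in> D" if h1: "(x,a) \<in> \<Union>C" and h2: "(y,b) \<in> \<Union>C" for x a y b
  proof -
    obtain A where A: "A \<in> C" "(x,a) \<in> A" using h1 by blast
    obtain B where B: "B \<in> C" "(y,b) \<in> B" using h2 by blast
    note AB = A B
    show ?thesis
    proof (cases "A \<subseteq> B")
      case True then show ?thesis using AB by blast
    next
      case False then have "B \<subseteq> A" using ch AB by blast
      then show ?thesis using AB by blast
    qed
  qed
  show ?thesis unfolding good_def
  proof (intro conjI allI impI)
    fix x a b assume "(x,a) \<in> \<Union>C" "(x,b) \<in> \<Union>C"
    then obtain D where "D \<in> C" "(x,a) \<in> D" "(x,b) \<in> D" using two by blast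
    then show "a = b" using good_fn[OF gd] by blast
  next
    obtain A where "A \<in> C" using assms(2) by auto
    then show "(v, p v) \<in> \<Union>C" using good_v[OF gd] by blast
  next
    fix x a assume "(x,a) \<in> \<Union>C"
    then obtain D where "D \<in> C" "(x,a) \<in> D" by blast
    then show "a \<le> p x" using good_dom[OF gd] by blast
  next
    fix x y a b assume "(x,a) \<in> \<Union>C" "(y,b) \<in> \<Union>C"
    then obtain D where "D \<in> C" "(x,a) \<in> D" "(y,b) \<in> D" using two by blast
    then show "(x+y,a+b) \<in> \<Union>C" using good_add[OF gd] by blast
  next
    fix x a c assume "(x,a) \<in> \<Union>C"
    then obtain D where "D \<in> C" "(x,a) \<in> D" by blast
    then show "(c *\<^sub>R x, c*a) \<in> \<Union>C" using good_sc[OF gd] by blast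
  qed
qed

lemma extend:
  assumes g: "good p v G" and w: "\<forall>a. (w,a) \<notin> G"
  shows "\<exists>G'. good p v G' \<and> G \<subseteq> G' \<and> G \<noteq> G'"
proof -
  have fnc: "\<And>x a b. (x,a) \<in> G \<Longrightarrow> (x,b) \<in> G \<Longrightarrow> a = b"
    and vG: "(v, p v) \<in> G" and dm: "\<And>x a. (x,a) \<in> G \<Longrightarrow> a \<le> p x"
    and ad: "\<And>x y a b. (x,a) \<in> G \<Longrightarrow> (y,b) \<in> G \<Longrightarrow> (x+y, a+b) \<in> G"
    and sc: "\<And>x a c. (x,a) \<in> G \<Longrightarrow> (c *\<^sub>R x, c*a) \<in> G"
    using good_fn[OF g] good_v[OF g] good_dom[OF g] good_add[OF g] good_sc[OF g] by auto
  have z: "(0, 0) \<in> G" using sc[OF vG, of 0] by simp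
  have neg: "(- x, - a) \<in> G" if "(x,a) \<in> G" for x a using sc[OF that, of "-1"] by simp
  define L where "L = {a - p (x - w) | x a. (x,a) \<in> G}"
  have key: "a - p (x - w) \<le> p (y + w) - b" if "(x,a) \<in> G" "(y,b) \<in> G" for x y a b
  proof -
    have "a + b \<le> p (x + y)" using dm[OF ad[OF that]] .
    also have "x + y = (x - w) + (y + w)" by simp
    also have "p \<dots> \<le> p (x - w) + p (y + w)" by (rule add)
    finally show ?thesis by simp
  qed
  have Lne: "L \<noteq> {}" using z unfolding L_def by blast
  have Lbd: "bdd_above L" unfolding L_def bdd_above_def using key[OF _ z] by auto
  define c where "c = Sup L"
  have c1: "a - p (x - w) \<le> c" if "(x,a) \<in> G" for x a
    unfolding c_def using Lbd that by (auto intro!: cSup_upper simp: L_def)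
  have c2: "c \<le> p (y + w) - b" if "(y,b) \<in> G" for y b
    unfolding c_def using Lne by (rule cSup_least) (auto simp: L_def intro: key[OF _ that])
  define G' where "G' = {(x + t *\<^sub>R w, a + t * c) | x a t. (x,a) \<in> G}"
  have uniq: "x = y \<and> s = t" if "(x,a) \<in> G" "(y,b) \<in> G" "x + s *\<^sub>R w = y + t *\<^sub>R w" for x y a b s t
  proof (cases "s = t")
    case True then show ?thesis using that by simp
  next
    case False
    have "(s - t) *\<^sub>R w = y - x" using that(3) by (simp add: algebra_simps)
    then have "(1/(s-t)) *\<^sub>R ((s - t) *\<^sub>R w) = (1/(s-t)) *\<^sub>R (y - x)" by simp
    then have "w = (1/(s-t)) *\<^sub>R (y - x)" using False by simp
    moreover have "(y - x, b - a) \<in> G" using ad[OF that(2) neg[OF that(1)]] by simp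
    ultimately have "(w, (1/(s-t)) * (b - a)) \<in> G" using sc by metis
    then show ?thesis using w by blast
  qed
  have dom': "a + t * c \<le> p (x + t *\<^sub>R w)" if "(x,a) \<in> G" for x a t
  proof -
    consider "t > 0" | "t = 0" | "t < 0" by linarith
    then show ?thesis
    proof cases
      case 1
      have "(1/t) * a \<le> p ((1/t) *\<^sub>R x + w) - c"
        using c2[OF sc[OF that, of "1/t"]] by simp
      then have "t * ((1/t) * a + c) \<le> t * p ((1/t) *\<^sub>R x + w)" using 1 by simp
      also have "t * p ((1/t) *\<^sub>R x + w) = p (t *\<^sub>R ((1/t) *\<^sub>R x + w))" using hom 1 by simp
      also have "t *\<^sub>R ((1/t) *\<^sub>R x + w) = x + t *\<^sub>R w" using 1 by (simp add: scaleR_add_right)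
      finally show ?thesis using 1 by (simp add: algebra_simps)
    next
      case 2 then show ?thesis using dm[OF that] by simp
    next
      case 3
      define s where "s = -t"
      have s: "s > 0" using 3 s_def by simp
      have "(1/s) * a - p ((1/s) *\<^sub>R x - w) \<le> c"
        using c1[OF sc[OF that, of "1/s"]] by simp
      then have "s * ((1/s) * a - c) \<le> s * p ((1/s) *\<^sub>R x - w)" using s by simp
      also have "s * p ((1/s) *\<^sub>R x - w) = p (s *\<^sub>R ((1/s) *\<^sub>R x - w))" using hom s by simp
      also have "s *\<^sub>R ((1/s) *\<^sub>R x - w) = x + t *\<^sub>R w" using s by (simp add: scaleR_diff_right s_def)
      finally show ?thesis using s by (simp add: algebra_simps s_def)
    qed
  qed
  have memG': "(x + t *\<^sub>R w, a + t * c) \<in> G'" if "(x,a) \<in> G" for x a t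
    unfolding G'_def using that by blast
  have "good p v G'" unfolding good_def
  proof (intro conjI allI impI)
    fix x a b assume "(x,a) \<in> G'" "(x,b) \<in> G'"
    then obtain x1 a1 t1 x2 a2 t2 where "(x1,a1) \<in> G" "(x2,a2) \<in> G" "x = x1 + t1 *\<^sub>R w" "a = a1 + t1 * c"
       "x = x2 + t2 *\<^sub>R w" "b = a2 + t2 * c" unfolding G'_def by blast
    then show "a = b" using uniq[of x1 a1 x2 a2 t1 t2] fnc by auto
  next
    have "(v + 0 *\<^sub>R w, p v + 0 * c) \<in> G'" unfolding G'_def using vG by blast
    then show "(v, p v) \<in> G'" by simp
  next
    fix x a assume "(x,a) \<in> G'" then show "a \<le> p x" unfolding G'_def using dom' by auto
  next
    fix x y a b assume "(x,a) \<in> G'" "(y,b) \<in> G'"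
    then obtain x1 a1 t1 x2 a2 t2 where "(x1,a1) \<in> G" "(x2,a2) \<in> G" "x = x1 + t1 *\<^sub>R w" "a = a1 + t1 * c"
       "y = x2 + t2 *\<^sub>R w" "b = a2 + t2 * c" unfolding G'_def by blast
    then show "(x+y, a+b) \<in> G'" using memG'[OF ad, of x1 a1 x2 a2 "t1+t2"]
      by (simp add: algebra_simps scaleR_add_left)
  next
    fix x a d assume "(x,a) \<in> G'"
    then obtain x1 a1 t1 where "(x1,a1) \<in> G" "x = x1 + t1 *\<^sub>R w" "a = a1 + t1 * c" unfolding G'_def by blast
    then show "(d *\<^sub>R x, d*a) \<in> G'" using memG'[OF sc, of x1 a1 d "d*t1"]
      by (simp add: algebra_simps scaleR_add_right)
  qed
  moreover have "G \<subseteq> G'" using memG'[of _ _ 0] by auto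
  moreover have "(w, c) \<in> G'" using memG'[OF z, of 1] by simp
  ultimately show ?thesis using w by blast
qed

theorem hahn_banach: "\<exists>\<phi>. linear \<phi> \<and> (\<forall>x. \<phi> x \<le> p x) \<and> \<phi> v = p v"
proof -
  have "\<exists>M\<in>{G. good p v G}. \<forall>X\<in>{G. good p v G}. M \<subseteq> X \<longrightarrow> X = M"
  proof (rule Zorn_Lemma2, intro ballI)
    fix C assume C: "C \<in> chains {G. good p v G}"
    show "\<exists>U\<in>{G. good p v G}. \<forall>X\<in>C. X \<subseteq> U"
    proof (cases "C = {}")
      case True then show ?thesis using base_good by blast
    next
      case False then show ?thesis using chain_good[OF C] by blast
    qed
  qed
  then obtain M where gM: "good p v M" and mx: "\<And>X. good p v X \<Longrightarrow> M \<subseteq> X \<Longrightarrow> X = M" by blast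
  have tot: "\<exists>a. (x,a) \<in> M" for x
  proof (rule ccontr)
    assume "\<not> ?thesis"
    then obtain G' where "good p v G'" "M \<subseteq> G'" "M \<noteq> G'" using extend[OF gM] by blast
    then show False using mx by blast
  qed
  have fnc: "\<And>x a b. (x,a) \<in> M \<Longrightarrow> (x,b) \<in> M \<Longrightarrow> a = b"
    and vG: "(v, p v) \<in> M" and dm: "\<And>x a. (x,a) \<in> M \<Longrightarrow> a \<le> p x"
    and ad: "\<And>x y a b. (x,a) \<in> M \<Longrightarrow> (y,b) \<in> M \<Longrightarrow> (x+y, a+b) \<in> M"
    and sc: "\<And>x a c. (x,a) \<in> M \<Longrightarrow> (c *\<^sub>R x, c*a) \<in> M"
    using good_fn[OF gM] good_v[OF gM] good_dom[OF gM] good_add[OF gM] good_sc[OF gM] by auto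
  define \<phi> where "\<phi> x = (THE a. (x,a) \<in> M)" for x
  have mem: "(x, \<phi> x) \<in> M" for x
    unfolding \<phi>_def using tot[of x] fnc by (metis theI)
  have ev: "(x,a) \<in> M \<Longrightarrow> \<phi> x = a" for x a using fnc mem by blast
  have "linear \<phi>"
    by (rule linearI) (auto intro!: ev ad sc mem)
  moreover have "\<phi> x \<le> p x" for x using dm[OF mem] .
  moreover have "\<phi> v = p v" using ev[OF vG] .
  ultimately show ?thesis by blast
qed

end


lemma tvs_add:
  assumes T: "lc_hausdorff_tvs T" and g1: "continuous_map X T g1" and g2: "continuous_map X T g2"
  shows "continuous_map X T (\<lambda>z. g1 z + g2 z)"
proof -
  have "continuous_map (prod_topology T T) T (\<lambda>(x, y). x + y)" using T unfolding lc_hausdorff_tvs_def by blast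
  from continuous_map_compose[OF continuous_map_pairedI[OF g1 g2] this] show ?thesis by (simp add: o_def)
qed

lemma tvs_scale:
  assumes T: "lc_hausdorff_tvs T" and h: "continuous_map X euclideanreal h" and g: "continuous_map X T g"
  shows "continuous_map X T (\<lambda>z. h z *\<^sub>R g z)"
proof -
  have "continuous_map (prod_topology euclideanreal T) T (\<lambda>(a, x). a *\<^sub>R x)" using T unfolding lc_hausdorff_tvs_def by blast
  from continuous_map_compose[OF continuous_map_pairedI[OF h g] this] show ?thesis by (simp add: o_def)
qed

lemma tvs_const:
  assumes T: "lc_hausdorff_tvs T" shows "continuous_map X T (\<lambda>z. c)"
  using T unfolding lc_hausdorff_tvs_def by simp

lemma tvs_open_pre:
  assumes T: "lc_hausdorff_tvs T" and "continuous_map X T f" "openin T U"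
  shows "openin X {x \<in> topspace X. f x \<in> U}"
  using openin_continuous_map_preimage assms(2,3) by blast

lemma cmid: "continuous_map X X (\<lambda>z. z)"
  using continuous_map_id unfolding id_def .

lemma cconst: "continuous_map X euclideanreal (\<lambda>z. c)" by simp

definition mink :: "'b::real_vector set \<Rightarrow> 'b \<Rightarrow> real" where
  "mink U x = Inf {t. t > 0 \<and> (1/t) *\<^sub>R x \<in> U}"

locale absconv =
  fixes U :: "'b::real_vector set"
  assumes cvx: "convex U" and z: "0 \<in> U" and absb: "\<And>x. \<exists>t>0. (1/t) *\<^sub>R x \<in> U"
begin

lemma up: assumes "t > 0" "(1/t) *\<^sub>R x \<in> U" "t \<le> t'" shows "(1/t') *\<^sub>R x \<in> U"
proof -
  have t': "t' > 0" using assms by simp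
  have "(t/t') *\<^sub>R ((1/t) *\<^sub>R x) + (1 - t/t') *\<^sub>R 0 \<in> U"
    by (rule convexD[OF cvx assms(2) z]) (use assms t' in auto)
  then show ?thesis using assms(1) t' by simp
qed

lemma ne: "{t. t > 0 \<and> (1/t) *\<^sub>R x \<in> U} \<noteq> {}" using absb[of x] by auto
lemma bdd: "bdd_below {t. t > 0 \<and> (1/t) *\<^sub>R x \<in> U}" by (rule bdd_belowI[of _ 0]) auto

lemma lower: "t > 0 \<Longrightarrow> (1/t) *\<^sub>R x \<in> U \<Longrightarrow> mink U x \<le> t"
  unfolding mink_def by (rule cInf_lower[OF _ bdd]) auto

lemma greatest: "(\<And>t. t > 0 \<Longrightarrow> (1/t) *\<^sub>R x \<in> U \<Longrightarrow> r \<le> t) \<Longrightarrow> r \<le> mink U x"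
  unfolding mink_def by (rule cInf_greatest[OF ne]) auto

lemma nonneg: "0 \<le> mink U x" by (rule greatest) simp

lemma lessD: "mink U x < r \<Longrightarrow> \<exists>t>0. t < r \<and> (1/t) *\<^sub>R x \<in> U"
  using cInf_lessD[OF ne, of x r] unfolding mink_def by auto

lemma sum_in: assumes "s > 0" "(1/s) *\<^sub>R x \<in> U" "t > 0" "(1/t) *\<^sub>R y \<in> U"
  shows "(1/(s+t)) *\<^sub>R (x + y) \<in> U"
proof -
  have "(s/(s+t)) *\<^sub>R ((1/s) *\<^sub>R x) + (t/(s+t)) *\<^sub>R ((1/t) *\<^sub>R y) \<in> U"
    by (rule convexD[OF cvx assms(2) assms(4)]) (use assms in \<open>auto simp: add_divide_distrib[symmetric]\<close>)
  moreover have "(s/(s+t)) *\<^sub>R ((1/s) *\<^sub>R x) + (t/(s+t)) *\<^sub>R ((1/t) *\<^sub>R y) = (1/(s+t)) *\<^sub>R (x + y)"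
    using assms by (simp add: scaleR_add_right)
  ultimately show ?thesis by simp
qed

lemma subadd: "mink U (x + y) \<le> mink U x + mink U y"
proof -
  have "mink U (x + y) - t \<le> mink U x" if t: "t > 0" "(1/t) *\<^sub>R y \<in> U" for t
  proof (rule greatest)
    fix s assume "s > 0" "(1/s) *\<^sub>R x \<in> U"
    then have "mink U (x+y) \<le> s + t" using sum_in t by (intro lower) auto
    then show "mink U (x + y) - t \<le> s" by simp
  qed
  then have "mink U (x + y) - mink U x \<le> t" if "t > 0" "(1/t) *\<^sub>R y \<in> U" for t
    using that by fastforce
  then have "mink U (x + y) - mink U x \<le> mink U y" by (rule greatest)
  then show ?thesis by simp
qed

lemma hom_le: assumes c: "c > 0" shows "mink U (c *\<^sub>R x) \<le> c * mink U x"
proof -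
  have "mink U (c *\<^sub>R x) / c \<le> t" if "t > 0" "(1/t) *\<^sub>R x \<in> U" for t
  proof -
    have "(1/(c*t)) *\<^sub>R (c *\<^sub>R x) = (1/t) *\<^sub>R x" using c by simp
    then have "mink U (c *\<^sub>R x) \<le> c * t" using that c by (intro lower) auto
    then show ?thesis using c by (simp add: divide_le_eq mult.commute)
  qed
  then have "mink U (c *\<^sub>R x) / c \<le> mink U x" by (rule greatest)
  then show ?thesis using c by (simp add: divide_le_eq mult.commute)
qed

lemma hom: assumes c: "c > 0" shows "mink U (c *\<^sub>R x) = c * mink U x"
proof -
  have "mink U x = mink U ((1/c) *\<^sub>R (c *\<^sub>R x))" using c by simp
  also have "\<dots> \<le> (1/c) * mink U (c *\<^sub>R x)" using c by (intro hom_le) simp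
  finally have "c * mink U x \<le> mink U (c *\<^sub>R x)" using c by (simp add: field_simps)
  then show ?thesis using hom_le[OF c, of x] by simp
qed

lemma zero: "mink U 0 = 0"
  using hom[of 2 0] by simp

lemma sublin: "sublin (mink U)"
  by unfold_locales (auto simp: subadd hom zero)

lemma ge1: "v \<notin> U \<Longrightarrow> 1 \<le> mink U v"
  using lessD[of v 1] up[of _ v 1] by force

lemma lt1: assumes "e > 0" "(1+e) *\<^sub>R u \<in> U" shows "mink U u < 1"
proof (rule ccontr)
  have "mink U u * (1+e) \<le> 1" using lower[of "1/(1+e)" u] assms by (simp add: divide_simps)
  moreover assume "\<not> mink U u < 1"
  then have "1 + e \<le> mink U u * (1+e)" using mult_right_mono[of 1 "mink U u" "1+e"] assms by simp
  ultimately show False using assms by linarith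
qed

end


lemma open_ray:
  assumes T: "lc_hausdorff_tvs T" and A: "openin T A" and a0: "x + a0 \<in> A"
  shows "\<exists>e>0. \<forall>r. \<bar>r - 1\<bar> < e \<longrightarrow> r *\<^sub>R x + a0 \<in> A"
proof -
  have "continuous_map euclideanreal T (\<lambda>r. r *\<^sub>R x + a0)"
    by (intro tvs_add[OF T] tvs_scale[OF T] tvs_const[OF T] cmid cconst)
  from openin_continuous_map_preimage[OF this A] have "open {r. r *\<^sub>R x + a0 \<in> A}" by simp
  moreover have "1 \<in> {r. r *\<^sub>R x + a0 \<in> A}" using a0 by simp
  ultimately obtain e where "e > 0" "ball 1 e \<subseteq> {r. r *\<^sub>R x + a0 \<in> A}"
    using open_contains_ball by blast
  moreover have "r \<in> ball 1 e" if "\<bar>r - 1\<bar> < e" for r using that by (simp add: dist_real_def abs_minus_commute)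
  ultimately show ?thesis by blast
qed

lemma open_zero:
  assumes T: "lc_hausdorff_tvs T" and A: "openin T A" and a0: "a0 \<in> A"
  shows "\<exists>e>0. \<forall>r. \<bar>r\<bar> < e \<longrightarrow> r *\<^sub>R x + a0 \<in> A"
proof -
  have "continuous_map euclideanreal T (\<lambda>r. r *\<^sub>R x + a0)"
    by (intro tvs_add[OF T] tvs_scale[OF T] tvs_const[OF T] cmid cconst)
  from openin_continuous_map_preimage[OF this A] have "open {r. r *\<^sub>R x + a0 \<in> A}" by simp
  moreover have "0 \<in> {r. r *\<^sub>R x + a0 \<in> A}" using a0 by simp
  ultimately obtain e where "e > 0" "ball 0 e \<subseteq> {r. r *\<^sub>R x + a0 \<in> A}"
    using open_contains_ball by blast
  then show ?thesis by (auto simp: dist_real_def intro!: exI[of _ e])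
qed

lemma linear_cont:
  assumes T: "lc_hausdorff_tvs T" and U: "openin T U" "0 \<in> U" and \<phi>: "linear \<phi>"
    and bd: "\<And>u. u \<in> U \<Longrightarrow> \<phi> u < 1"
  shows "continuous_map T euclideanreal \<phi>"
  unfolding continuous_map_def
proof (intro conjI allI impI)
  show "\<phi> \<in> topspace T \<rightarrow> topspace euclideanreal" by simp
  fix S :: "real set" assume "openin euclideanreal S"
  then have S: "open S" by simp
  have tT: "topspace T = UNIV" using T unfolding lc_hausdorff_tvs_def by blast
  show "openin T {x \<in> topspace T. \<phi> x \<in> S}"
  proof (subst openin_subopen, intro ballI)
    fix x assume "x \<in> {x \<in> topspace T. \<phi> x \<in> S}"
    then have "\<phi> x \<in> S" by simp
    then obtain e where e: "e > 0" "ball (\<phi> x) e \<subseteq> S" using S open_contains_ball by blast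
    define V where "V = {y \<in> topspace T. (2/e) *\<^sub>R (y + (- x)) \<in> U} \<inter> {y \<in> topspace T. (-(2/e)) *\<^sub>R (y + (- x)) \<in> U}"
    have c1: "continuous_map T T (\<lambda>y. (c::real) *\<^sub>R (y + (- x)))" for c
      by (intro tvs_add[OF T] tvs_scale[OF T] tvs_const[OF T] cmid cconst)
    have "openin T V" unfolding V_def
      by (intro openin_Int openin_continuous_map_preimage[OF c1 U(1)])
    moreover have "x \<in> V" using U(2) tT by (simp add: V_def)
    moreover have "V \<subseteq> {x \<in> topspace T. \<phi> x \<in> S}"
    proof
      fix y assume "y \<in> V"
      then have "\<phi> ((2/e) *\<^sub>R (y + (- x))) < 1" "\<phi> ((-(2/e)) *\<^sub>R (y + (- x))) < 1"
        using bd unfolding V_def by auto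
      moreover have "\<phi> (c *\<^sub>R (y + (- x))) = c * (\<phi> y - \<phi> x)" for c
        using linear_scale[OF \<phi>] linear_diff[OF \<phi>] by simp
      ultimately have "(2/e) * (\<phi> y - \<phi> x) < 1" "(-(2/e)) * (\<phi> y - \<phi> x) < 1"
        by metis+
      then have "\<bar>\<phi> y - \<phi> x\<bar> < e" using e(1) by (auto simp: field_simps abs_less_iff)
      then have "\<phi> y \<in> ball (\<phi> x) e" by (simp add: dist_real_def abs_minus_commute)
      then show "y \<in> {x \<in> topspace T. \<phi> x \<in> S}" using e tT by auto
    qed
    ultimately show "\<exists>V. openin T V \<and> x \<in> V \<and> V \<subseteq> {x \<in> topspace T. \<phi> x \<in> S}" by blast
  qed
qed

theorem separation:
  assumes T: "lc_hausdorff_tvs T" and A: "openin T A" "convex A" "A \<noteq> {}" and p: "p \<notin> A"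
  shows "\<exists>\<phi>. linear \<phi> \<and> continuous_map T euclideanreal \<phi> \<and> (\<forall>a\<in>A. \<phi> p < \<phi> a)"
proof -
  obtain a0 where a0: "a0 \<in> A" using A(3) by blast
  have tT: "topspace T = UNIV" using T unfolding lc_hausdorff_tvs_def by blast
  define U where "U = {x. x + a0 \<in> A}"
  have Uo: "openin T U"
  proof -
    have "continuous_map T T (\<lambda>x. x + a0)"
      by (intro tvs_add[OF T] tvs_const[OF T] cmid cconst)
    from openin_continuous_map_preimage[OF this A(1)] show ?thesis by (simp add: U_def tT)
  qed
  have Uc: "convex U" unfolding convex_def U_def
  proof (intro ballI allI impI, simp)
    fix x y :: 'a and u v :: real assume "x + a0 \<in> A" "y + a0 \<in> A" "0 \<le> u" "0 \<le> v" "u + v = 1"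
    then have "u *\<^sub>R (x + a0) + v *\<^sub>R (y + a0) \<in> A" using A(2) by (intro convexD) auto
    moreover have "u *\<^sub>R (x + a0) + v *\<^sub>R (y + a0) = u *\<^sub>R x + v *\<^sub>R y + a0"
      using \<open>u + v = 1\<close> by (simp add: scaleR_add_right algebra_simps scaleR_add_left[symmetric])
    ultimately show "u *\<^sub>R x + v *\<^sub>R y + a0 \<in> A" by simp
  qed
  have U0: "0 \<in> U" using a0 by (simp add: U_def)
  have absb: "\<exists>t>0. (1/t) *\<^sub>R x \<in> U" for x
  proof -
    obtain e where e: "e > 0" "\<And>r. \<bar>r\<bar> < e \<Longrightarrow> r *\<^sub>R x + a0 \<in> A" using open_zero[OF T A(1) a0] by blast
    then have "(e/2) *\<^sub>R x \<in> U" by (simp add: U_def)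
    then show ?thesis using e by (intro exI[of _ "2/e"]) auto
  qed
  interpret absconv U using Uc U0 absb by unfold_locales auto
  interpret sublin "mink U" by (rule sublin)
  define v where "v = p - a0"
  have vU: "v \<notin> U" using p by (simp add: U_def v_def)
  obtain \<psi> where \<psi>: "linear \<psi>" "\<And>x. \<psi> x \<le> mink U x" "\<psi> v = mink U v"
    using hahn_banach by blast
  have lt: "\<psi> u < 1" if "u \<in> U" for u
  proof -
    have "u + a0 \<in> A" using that by (simp add: U_def)
    then obtain e where e: "e > 0" "\<And>r. \<bar>r - 1\<bar> < e \<Longrightarrow> r *\<^sub>R u + a0 \<in> A"
      using open_ray[OF T A(1), of u a0] by blast
    then have "(1 + e/2) *\<^sub>R u \<in> U" by (simp add: U_def)
    then have "mink U u < 1" using e by (intro lt1[of "e/2"]) auto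
    then show ?thesis using \<psi>(2)[of u] by simp
  qed
  have cont: "continuous_map T euclideanreal \<psi>"
    by (rule linear_cont[OF T Uo U0 \<psi>(1) lt])
  have sep: "\<psi> a < \<psi> p" if "a \<in> A" for a
  proof -
    have "a - a0 \<in> U" using that by (simp add: U_def)
    then have "\<psi> (a - a0) < 1" by (rule lt)
    also have "1 \<le> \<psi> (p - a0)" using ge1[OF vU] \<psi>(3) by (simp add: v_def)
    finally show ?thesis using \<psi>(1) by (simp add: linear_diff)
  qed
  show ?thesis
  proof (intro exI conjI ballI)
    show "linear (\<lambda>x. - \<psi> x)" using \<psi>(1) by (simp add: linear_compose_neg)
    show "continuous_map T euclideanreal (\<lambda>x. - \<psi> x)" using cont by (simp add: continuous_map_minus)
    fix a assume "a \<in> A" then show "- \<psi> p < - \<psi> a" using sep by simp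
  qed
qed



theorem theorem1:
  fixes \<Omega> :: "'a::topological_space set"
    and T :: "'b::real_vector topology"
    and f :: "'a \<Rightarrow> 'b"
  assumes "lc_hausdorff_tvs T"
    and "open \<Omega>" and "\<Omega> \<noteq> {}" and "compact (closure \<Omega>)" and "frontier \<Omega> \<noteq> {}"
    and "continuous_map (subtopology euclidean \<Omega>) T f"
  shows "convex_hull_like T f \<Omega> \<or>
    (\<exists>X. open X \<and> X \<noteq> {} \<and> closure X \<subseteq> \<Omega> \<and>
       (\<forall>g. continuous_map (subtopology euclidean \<Omega>) T g \<longrightarrow>
          (\<exists>l0\<ge>0. \<forall>l>l0.
             (\<exists>y0 \<in> (\<lambda>x. g x + l *\<^sub>R f x) ` X.
                supported_at T ((\<lambda>x. g x + l *\<^sub>R f x) ` X) y0))))"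
proof (cases "convex_hull_like T f \<Omega>")
  case True then show ?thesis by blast
next
  case False
  note T = assms(1) and Om = assms(2) and fc = assms(6)
  have tT: "topspace T = UNIV" using T unfolding lc_hausdorff_tvs_def by blast
  obtain \<psi> where \<psi>c: "continuous_map T euclideanreal \<psi>" and qc: "quasi_convex \<psi>"
    and nl: "\<And>xs. xs \<in> frontier \<Omega> \<Longrightarrow> Limsup (at xs within \<Omega>) (\<lambda>x. ereal (\<psi> (f x))) \<noteq> (SUP x\<in>\<Omega>. ereal (\<psi> (f x)))"
    using False unfolding convex_hull_like_def by blast
  define h where "h x = \<psi> (f x)" for x
  have hc: "continuous_on \<Omega> h"
    using continuous_map_compose[OF fc \<psi>c] unfolding h_def o_def by simp
  define S where "S = (SUP x\<in>\<Omega>. ereal (h x))"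
  have frO: "xs \<notin> \<Omega>" if "xs \<in> frontier \<Omega>" for xs
    using that Om by (simp add: frontier_def interior_open)
  have lt: "Limsup (at xs within \<Omega>) (\<lambda>x. ereal (h x)) < S" if xs: "xs \<in> frontier \<Omega>" for xs
  proof -
    have "eventually (\<lambda>x. ereal (h x) \<le> S) (at xs within \<Omega>)"
      unfolding eventually_at_topological S_def by (intro exI[of _ UNIV]) (auto intro: SUP_upper)
    then have "Limsup (at xs within \<Omega>) (\<lambda>x. ereal (h x)) \<le> S" by (rule Limsup_bounded)
    moreover have "Limsup (at xs within \<Omega>) (\<lambda>x. ereal (h x)) \<noteq> S" using nl[OF xs] by (simp add: h_def S_def)
    ultimately show ?thesis by simp
  qed
  define Ov where "Ov r = \<Union>{N. open N \<and> (\<forall>x\<in>N \<inter> \<Omega>. h x < r)}" for r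
  have Oopen: "open (Ov r)" for r unfolding Ov_def by auto
  have Obd: "\<And>x. x \<in> Ov r \<Longrightarrow> x \<in> \<Omega> \<Longrightarrow> h x < r" for r unfolding Ov_def by auto
  have Omono: "Ov r \<subseteq> Ov r'" if "r \<le> r'" for r r' unfolding Ov_def using that by (intro Union_mono) force
  have cover: "frontier \<Omega> \<subseteq> (\<Union>r\<in>{r. ereal r < S}. Ov r)"
  proof
    fix xs assume xs: "xs \<in> frontier \<Omega>"
    obtain r where r: "Limsup (at xs within \<Omega>) (\<lambda>x. ereal (h x)) < ereal r" "ereal r < S"
      using ereal_dense2[OF lt[OF xs]] by blast
    have "eventually (\<lambda>x. ereal (h x) < ereal r) (at xs within \<Omega>)" by (rule Limsup_lessD[OF r(1)])
    then obtain N where N: "open N" "xs \<in> N" "\<And>x. x \<in> N \<Longrightarrow> x \<in> \<Omega> \<Longrightarrow> x \<noteq> xs \<Longrightarrow> h x < r"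
      unfolding eventually_at_topological by auto
    have "\<forall>x\<in>N \<inter> \<Omega>. h x < r" using N(3) frO[OF xs] by auto
    then have "xs \<in> Ov r" using N unfolding Ov_def by blast
    then show "xs \<in> (\<Union>r\<in>{r. ereal r < S}. Ov r)" using r(2) by blast
  qed
  have frc: "compact (frontier \<Omega>)"
  proof -
    have "frontier \<Omega> = closure \<Omega> \<inter> frontier \<Omega>" using closure_Un_frontier[of \<Omega>] by blast
    then show ?thesis using compact_Int_closed[OF assms(4) frontier_closed[of \<Omega>]] by metis
  qed
  obtain R where R: "R \<subseteq> {r. ereal r < S}" "finite R" "frontier \<Omega> \<subseteq> (\<Union>r\<in>R. Ov r)"
    using compactE_image[OF frc Oopen cover] by blast
  have Rne: "R \<noteq> {}" using R(3) assms(5) by auto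
  define r0 where "r0 = Max R"
  have r0S: "ereal r0 < S" using Max_in[OF R(2) Rne] R(1) unfolding r0_def by blast
  define Ob where "Ob = Ov r0"
  have frOb: "frontier \<Omega> \<subseteq> Ob"
    using R(3) Omono Max_ge[OF R(2)] unfolding Ob_def r0_def by blast
  have Obo: "open Ob" unfolding Ob_def by (rule Oopen)
  have Obh: "\<And>x. x \<in> Ob \<Longrightarrow> x \<in> \<Omega> \<Longrightarrow> h x < r0" unfolding Ob_def by (rule Obd)
  obtain r1 where r1: "ereal r0 < ereal r1" "ereal r1 < S" using ereal_dense2[OF r0S] by blast
  have r01: "r0 < r1" using r1 by simp
  define X where "X = {x \<in> \<Omega>. r1 < h x}"
  have Xopen: "open X"
  proof -
    have "\<forall>B. open B \<longrightarrow> open (h -` B \<inter> \<Omega>)" using continuous_on_open_vimage[OF Om] hc by (rule iffD1)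
    then have "open (h -` {r1<..} \<inter> \<Omega>)" by simp
    moreover have "h -` {r1<..} \<inter> \<Omega> = X" unfolding X_def by auto
    ultimately show ?thesis by simp
  qed
  obtain xX where xX: "xX \<in> X"
  proof -
    obtain x where "x \<in> \<Omega>" "ereal r1 < ereal (h x)" using r1(2) unfolding S_def less_SUP_iff by blast
    then have "x \<in> X" unfolding X_def by simp
    then show ?thesis by (rule that)
  qed
  have XOb: "Ob \<inter> X = {}"
  proof (rule ccontr)
    assume "Ob \<inter> X \<noteq> {}"
    then obtain x where x: "x \<in> Ob" "x \<in> \<Omega>" "r1 < h x" unfolding X_def by blast
    then have "h x < r0" using Obh by blast
    then show False using x(3) r01 by simp
  qed
  have clX: "closure X \<subseteq> \<Omega>"
  proof
    fix x assume x: "x \<in> closure X"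
    then have "x \<in> closure \<Omega>" using closure_mono[of X \<Omega>] unfolding X_def by blast
    moreover have "x \<notin> Ob" using x XOb open_Int_closure_eq_empty[OF Obo, of X] by blast
    ultimately show "x \<in> \<Omega>" using closure_Un_frontier[of \<Omega>] frOb by blast
  qed
  define K where "K = closure X"
  have Kc: "compact K"
  proof -
    have "K = closure \<Omega> \<inter> K" using closure_mono[of X \<Omega>] unfolding K_def X_def by blast
    then show ?thesis using compact_Int_closed[OF assms(4) closed_closure, of X] unfolding K_def by simp
  qed
  have XK: "X \<subseteq> K" unfolding K_def by (rule closure_subset)
  have KO: "K \<subseteq> \<Omega>" unfolding K_def by (rule clX)
  obtain x0 where x0: "x0 \<in> K" "\<And>y. y \<in> K \<Longrightarrow> h y \<le> h x0"
    using continuous_attains_sup[OF Kc _ continuous_on_subset[OF hc KO]] xX XK by blast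
  have hmax: "h x \<le> h x0" if "x \<in> \<Omega>" for x
  proof (cases "r1 < h x")
    case True then show ?thesis using that x0 XK unfolding X_def by blast
  next
    case False
    then have "h x \<le> r1" by simp
    also have "r1 < h xX" using xX unfolding X_def by simp
    also have "h xX \<le> h x0" using x0 xX XK by blast
    finally show ?thesis by simp
  qed
  have x0X: "x0 \<in> X"
  proof -
    have "r1 < h xX" using xX unfolding X_def by simp
    also have "h xX \<le> h x0" using x0 xX XK by blast
    finally show ?thesis using x0 KO unfolding X_def by blast
  qed
  define s where "s = h x0"
  define A where "A = {y. \<psi> y < s}"
  have Aopen: "openin T A"
    using openin_continuous_map_preimage[OF \<psi>c, of "{..<s}"] tT unfolding A_def by simp
  have Acvx: "convex A" unfolding convex_def
  proof (intro ballI allI impI)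
    fix y1 y2 :: 'b and u v :: real assume y: "y1 \<in> A" "y2 \<in> A" and uv: "0 \<le> u" "0 \<le> v" "u + v = 1"
    define m where "m = max (\<psi> y1) (\<psi> y2)"
    have "convex (\<psi> -` {..m})" using qc unfolding quasi_convex_def by blast
    moreover have "y1 \<in> \<psi> -` {..m}" "y2 \<in> \<psi> -` {..m}" unfolding m_def by auto
    ultimately have "u *\<^sub>R y1 + v *\<^sub>R y2 \<in> \<psi> -` {..m}" using uv by (intro convexD) auto
    moreover have "m < s" using y unfolding m_def A_def by simp
    ultimately show "u *\<^sub>R y1 + v *\<^sub>R y2 \<in> A" unfolding A_def by simp
  qed
  have Ane: "A \<noteq> {}"
  proof -
    obtain xs where "xs \<in> frontier \<Omega>" using assms(5) by blast
    then have "xs \<in> Ob \<inter> closure \<Omega>" using frOb closure_Un_frontier[of \<Omega>] by blast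
    then have "Ob \<inter> \<Omega> \<noteq> {}" using open_Int_closure_eq_empty[OF Obo, of \<Omega>] by blast
    then obtain x where x: "x \<in> Ob" "x \<in> \<Omega>" by blast
    then have "h x < s" using Obh[OF x] r01 x0X unfolding s_def X_def by simp
    then show ?thesis unfolding A_def h_def by blast
  qed
  have pA: "f x0 \<notin> A" unfolding A_def s_def h_def by simp
  obtain \<phi> where \<phi>: "linear \<phi>" "continuous_map T euclideanreal \<phi>" "\<And>a. a \<in> A \<Longrightarrow> \<phi> (f x0) < \<phi> a"
    using separation[OF T Aopen Acvx Ane pA] by blast
  have \<phi>nz: "\<phi> \<noteq> (\<lambda>_. 0)" using \<phi>(3) Ane by force
  have fA: "f x \<in> A" if "x \<in> \<Omega>" "x \<notin> X" for x
    using that r01 x0X unfolding A_def s_def X_def h_def by force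
  have main: "\<exists>l0\<ge>0. \<forall>l>l0. (\<exists>y0 \<in> (\<lambda>x. g x + l *\<^sub>R f x) ` X. supported_at T ((\<lambda>x. g x + l *\<^sub>R f x) ` X) y0)"
    if gc: "continuous_map (subtopology euclidean \<Omega>) T g" for g
  proof -
    define k where "k x = \<phi> (g x)" for x
    define m where "m x = \<phi> (f x)" for x
    have kc: "continuous_on \<Omega> k"
      using continuous_map_compose[OF gc \<phi>(2)] unfolding k_def o_def by simp
    have mc: "continuous_on \<Omega> m"
      using continuous_map_compose[OF fc \<phi>(2)] unfolding m_def o_def by simp
    define B where "B = K \<inter> - X"
    have Bc: "compact B" unfolding B_def using Kc Xopen by (intro compact_Int_closed) (auto simp: closed_Compl)
    obtain \<delta> where \<delta>: "\<delta> > 0" "\<And>x. x \<in> B \<Longrightarrow> m x0 + \<delta> \<le> m x"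
    proof (cases "B = {}")
      case True then show ?thesis using that[of 1] by simp
    next
      case False
      obtain b where b: "b \<in> B" "\<And>x. x \<in> B \<Longrightarrow> m b \<le> m x"
        using continuous_attains_inf[OF Bc False continuous_on_subset[OF mc]] KO unfolding B_def by blast
      have "f b \<in> A" using b(1) KO unfolding B_def by (intro fA) auto
      then have "m x0 < m b" using \<phi>(3) unfolding m_def by blast
      then show ?thesis using that[of "m b - m x0"] b by force
    qed
    obtain kmin where kmin: "\<And>x. x \<in> K \<Longrightarrow> kmin \<le> k x"
      using continuous_attains_inf[OF Kc _ continuous_on_subset[OF kc KO]] x0 by blast
    obtain kmax where kmax: "\<And>x. x \<in> K \<Longrightarrow> k x \<le> kmax"
      using continuous_attains_sup[OF Kc _ continuous_on_subset[OF kc KO]] x0 by blast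
    define l0 where "l0 = max 0 ((kmax - kmin) / \<delta>)"
    show ?thesis
    proof (intro exI[of _ l0] conjI allI impI)
      show "0 \<le> l0" unfolding l0_def by simp
      fix l assume l: "l0 < l"
      have l0': "0 < l" "kmax - kmin < l * \<delta>" using l \<delta>(1) unfolding l0_def by (auto simp: pos_divide_less_eq)
      define F where "F x = k x + l * m x" for x
      have Fc: "continuous_on K F" unfolding F_def
        by (intro continuous_intros continuous_on_subset[OF kc KO] continuous_on_subset[OF mc KO])
      obtain xm where xm: "xm \<in> K" "\<And>y. y \<in> K \<Longrightarrow> F xm \<le> F y"
        using continuous_attains_inf[OF Kc _ Fc] x0 by blast
      have xmX: "xm \<in> X"
      proof (rule ccontr)
        assume "xm \<notin> X"
        then have "xm \<in> B" using xm unfolding B_def by simp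
        then have "l * (m x0 + \<delta>) \<le> l * m xm" using \<delta>(2) l0'(1) by (intro mult_left_mono) auto
        then have "F x0 < F xm" using kmin[OF xm(1)] kmax[OF x0(1)] l0' unfolding F_def
          by (simp add: algebra_simps)
        then show False using xm(2)[OF x0(1)] by simp
      qed
      have \<phi>e: "\<phi> (g x + l *\<^sub>R f x) = F x" for x
        unfolding F_def k_def m_def using linear_add[OF \<phi>(1)] linear_scale[OF \<phi>(1)] by simp
      have "supported_at T ((\<lambda>x. g x + l *\<^sub>R f x) ` X) (g xm + l *\<^sub>R f xm)"
        unfolding supported_at_def
      proof (intro conjI exI[of _ \<phi>] ballI)
        show "g xm + l *\<^sub>R f xm \<in> (\<lambda>x. g x + l *\<^sub>R f x) ` X" using xmX by blast
        fix y assume "y \<in> (\<lambda>x. g x + l *\<^sub>R f x) ` X"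
        then obtain x where "x \<in> X" "y = g x + l *\<^sub>R f x" by blast
        then show "\<phi> (g xm + l *\<^sub>R f xm) \<le> \<phi> y" using xm(2) XK \<phi>e by auto
      qed (use \<phi> \<phi>nz in auto)
      then show "\<exists>y0 \<in> (\<lambda>x. g x + l *\<^sub>R f x) ` X. supported_at T ((\<lambda>x. g x + l *\<^sub>R f x) ` X) y0"
        using xmX by blast
    qed
  qed
  have "open X \<and> X \<noteq> {} \<and> closure X \<subseteq> \<Omega>" using Xopen xX clX by blast
  then show ?thesis using main by blast
qed

end
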